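(* Let $\Pi$ be an $n$-dimensional linear space satisfying the exchange axiom and the axiom (P2), let $0<k<n-1$, let $B=\{p_1,\dots,p_{n+1}\}$ be a base of $\Pi$, let $\mathcal{B}_k$ be the base subset of $\mathcal{G}_k(\Pi)$ associated with $B$, and put $m=\max\{k,n-k-1\}$. Two distinct elements $U,U'$ of $\mathcal{B}_k$ are adjacent if and only if there exists a regular collection $\mathcal{R}^1,\dots,\mathcal{R}^m$ of $m$ complement subsets of $\mathcal{B}_k$ such that $U$ and $U'$ belong to each $\mathcal{R}^i$, $i=1,\dots,m$.
   Context: A linear space $\Pi=(P,\mathcal{L})$ is a set $P$ of points with a family $\mathcal{L}$ of proper subsets (lines) such that each line has at least two points and any two distinct points $p,q$ lie on exactly one line $pq$. A subspace is a set $S\subset P$ with $pq\subset S$ for all distinct $p,q\in S$; $\overline{X}$ is the smallest subspace containing $X$. A set $X$ is independent if $\overline{X}$ is not spanned by a proper subset of $X$; a base of $\Pi$ is an independent set spanning $P$. A subspace is $m$-dimensional if $m+1$ is the smallest number of points spanning it. Exchange axiom: for every $X\subset P$ and $p_1,p_2\in P\setminus\overline{X}$, $p_2\in\overline{X\cup\{p_1\}}$ implies $p_1\in\overline{X\cup\{p_2\}}$. Axiom (P2): every line has at least three points. $\mathcal{G}_k(\Pi)$ is the set of $k$-dimensional subspaces; two of them are adjacent if their intersection is $(k-1)$-dimensional. The base subset of $\mathcal{G}_k(\Pi)$ associated with a base $B$ is the set of all $k$-dimensional subspaces spanned by points of $B$. A subset $\mathcal{R}\subset\mathcal{B}_k$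 is exact if $\mathcal{B}_k$ is the unique base subset of $\mathcal{G}_k(\Pi)$ containing $\mathcal{R}$, and inexact otherwise. A complement subset of $\mathcal{B}_k$ is a set $\mathcal{R}\subset\mathcal{B}_k$ such that $\mathcal{B}_k\setminus\mathcal{R}$ is a maximal (under inclusion) inexact subset of $\mathcal{B}_k$. A collection $\mathcal{R}^1,\dots,\mathcal{R}^{m+1}$ of $m+1$ complement subsets is regular if $\mathcal{R}^1\cap\dots\cap\mathcal{R}^{m+1}$ consists of exactly one element; a collection of $m$ complement subsets is regular if it can be extended (by one more complement subset) to a regular collection of $m+1$ complement subsets. *)

theory Defs
  imports Main
begin

definition linear_space :: "'a set \<Rightarrow> 'a set set \<Rightarrow> bool" where
  "linear_space P L \<longleftrightarrow>
     (\<forall>l\<in>L. l \<subset> P \<and> (\<exists>p\<in>l. \<exists>q\<in>l. p \<noteq> q)) \<and>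
     (\<forall>p\<in>P. \<forall>q\<in>P. p \<noteq> q \<longrightarrow> (\<exists>!l. l \<in> L \<and> p \<in> l \<and> q \<in> l))"

definition subspace :: "'a set \<Rightarrow> 'a set set \<Rightarrow> 'a set \<Rightarrow> bool" where
  "subspace P L S \<longleftrightarrow> S \<subseteq> P \<and>
     (\<forall>l\<in>L. \<forall>p\<in>S. \<forall>q\<in>S. p \<noteq> q \<and> p \<in> l \<and> q \<in> l \<longrightarrow> l \<subseteq> S)"

definition span :: "'a set \<Rightarrow> 'a set set \<Rightarrow> 'a set \<Rightarrow> 'a set" where
  "span P L X = \<Inter>{S. subspace P L S \<and> X \<subseteq> S}"

definition independent :: "'a set \<Rightarrow> 'a set set \<Rightarrow> 'a set \<Rightarrow> bool" where
  "independent P L X \<longleftrightarrow> X \<subseteq> P \<and> (\<forall>Y. Y \<subset> X \<longrightarrow> span P L Y \<noteq> span P L X)"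

definition is_base :: "'a set \<Rightarrow> 'a set set \<Rightarrow> 'a set \<Rightarrow> bool" where
  "is_base P L B \<longleftrightarrow> independent P L B \<and> span P L B = P"

definition has_dim :: "'a set \<Rightarrow> 'a set set \<Rightarrow> 'a set \<Rightarrow> nat \<Rightarrow> bool" where
  "has_dim P L S m \<longleftrightarrow> subspace P L S \<and>
     (\<exists>X. X \<subseteq> P \<and> finite X \<and> card X = m + 1 \<and> span P L X = S) \<and>
     (\<forall>X. X \<subseteq> P \<and> finite X \<and> span P L X = S \<longrightarrow> m + 1 \<le> card X)"

definition exchange_axiom :: "'a set \<Rightarrow> 'a set set \<Rightarrow> bool" where
  "exchange_axiom P L \<longleftrightarrow>
     (\<forall>X p1 p2. X \<subseteq> P \<and> p1 \<in> P - span P L X \<and> p2 \<in> P - span P L X \<and>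
        p2 \<in> span P L (insert p1 X) \<longrightarrow> p1 \<in> span P L (insert p2 X))"

definition axiom_P2 :: "'a set set \<Rightarrow> bool" where
  "axiom_P2 L \<longleftrightarrow> (\<forall>l\<in>L. \<exists>a\<in>l. \<exists>b\<in>l. \<exists>c\<in>l. a \<noteq> b \<and> a \<noteq> c \<and> b \<noteq> c)"

definition grass :: "'a set \<Rightarrow> 'a set set \<Rightarrow> nat \<Rightarrow> 'a set set" where
  "grass P L k = {S. has_dim P L S k}"

definition adjacent :: "'a set \<Rightarrow> 'a set set \<Rightarrow> nat \<Rightarrow> 'a set \<Rightarrow> 'a set \<Rightarrow> bool" where
  "adjacent P L k U U' \<longleftrightarrow> has_dim P L U k \<and> has_dim P L U' k \<and> has_dim P L (U \<inter> U') (k - 1)"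

definition base_subset :: "'a set \<Rightarrow> 'a set set \<Rightarrow> nat \<Rightarrow> 'a set \<Rightarrow> 'a set set" where
  "base_subset P L k B = {S \<in> grass P L k. \<exists>X. X \<subseteq> B \<and> span P L X = S}"

definition exact :: "'a set \<Rightarrow> 'a set set \<Rightarrow> nat \<Rightarrow> 'a set \<Rightarrow> 'a set set \<Rightarrow> bool" where
  "exact P L k B R \<longleftrightarrow> R \<subseteq> base_subset P L k B \<and>
     (\<forall>B'. is_base P L B' \<and> R \<subseteq> base_subset P L k B' \<longrightarrow> base_subset P L k B' = base_subset P L k B)"

definition inexact :: "'a set \<Rightarrow> 'a set set \<Rightarrow> nat \<Rightarrow> 'a set \<Rightarrow> 'a set set \<Rightarrow> bool" where
  "inexact P L k B R \<longleftrightarrow> R \<subseteq> base_subset P L k B \<and> \<not> exact P L k B R"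

definition maximal_inexact :: "'a set \<Rightarrow> 'a set set \<Rightarrow> nat \<Rightarrow> 'a set \<Rightarrow> 'a set set \<Rightarrow> bool" where
  "maximal_inexact P L k B R \<longleftrightarrow> inexact P L k B R \<and>
     (\<forall>R'. R \<subset> R' \<and> R' \<subseteq> base_subset P L k B \<longrightarrow> \<not> inexact P L k B R')"

definition complement_subset :: "'a set \<Rightarrow> 'a set set \<Rightarrow> nat \<Rightarrow> 'a set \<Rightarrow> 'a set set \<Rightarrow> bool" where
  "complement_subset P L k B R \<longleftrightarrow> R \<subseteq> base_subset P L k B \<and>
     maximal_inexact P L k B (base_subset P L k B - R)"

definition regular_full :: "'a set \<Rightarrow> 'a set set \<Rightarrow> nat \<Rightarrow> 'a set \<Rightarrow> nat \<Rightarrow> 'a set set set \<Rightarrow> bool" where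
  "regular_full P L k B m C \<longleftrightarrow> finite C \<and> card C = m + 1 \<and>
     (\<forall>R\<in>C. complement_subset P L k B R) \<and> (\<exists>U. \<Inter>C = {U})"

definition regular :: "'a set \<Rightarrow> 'a set set \<Rightarrow> nat \<Rightarrow> 'a set \<Rightarrow> nat \<Rightarrow> 'a set set set \<Rightarrow> bool" where
  "regular P L k B m C \<longleftrightarrow> finite C \<and> card C = m \<and>
     (\<forall>R\<in>C. complement_subset P L k B R) \<and>
     (\<exists>R. complement_subset P L k B R \<and> R \<notin> C \<and> regular_full P L k B m (insert R C))"

end

theory Submission
  imports Defs
begin


lemma span_mono: "X \<subseteq> Y \<Longrightarrow> span P L X \<subseteq> span P L Y"
  unfolding span_def by blast

lemma span_least: "subspace P L S \<Longrightarrow> X \<subseteq> S \<Longrightarrow> span P L X \<subseteq> S"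
  unfolding span_def by blast

lemma span_empty: "span P L {} = {}"
proof -
  have "subspace P L {}" unfolding subspace_def by blast
  then show ?thesis using span_least[of P L "{}" "{}"] by blast
qed

lemma between_card:
  assumes "finite C" "A \<subseteq> C" "card A \<le> c" "c \<le> card C"
  shows "\<exists>T. A \<subseteq> T \<and> T \<subseteq> C \<and> card T = c"
proof -
  have fA: "finite A" using assms finite_subset by blast
  have "c - card A \<le> card (C - A)" using assms fA by (simp add: card_Diff_subset)
  then obtain D where D: "D \<subseteq> C - A" "card D = c - card A" "finite D"
    by (rule obtain_subset_with_card_n)
  have "card (A \<union> D) = card A + card D" using D fA by (subst card_Un_disjoint) auto
  then show ?thesis using D assms by (intro exI[of _ "A \<union> D"]) auto
qed

locale ls =
  fixes P :: "'a set" and L :: "'a set set"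
  assumes LS: "linear_space P L" and EX: "exchange_axiom P L"
begin

abbreviation sp where "sp X \<equiv> span P L X"

lemma subspace_P: "subspace P L P"
  using LS unfolding linear_space_def subspace_def by blast

lemma span_sub_P': "X \<subseteq> P \<Longrightarrow> sp X \<subseteq> P"
  using span_least[OF subspace_P] by blast

lemma span_inc: "X \<subseteq> P \<Longrightarrow> X \<subseteq> sp X"
  unfolding span_def by blast

lemma subspace_span: "X \<subseteq> P \<Longrightarrow> subspace P L (sp X)"
proof -
  assume X: "X \<subseteq> P"
  have "sp X \<subseteq> P" using span_sub_P' X .
  moreover have "l \<subseteq> sp X" if "l \<in> L" "p \<in> sp X" "q \<in> sp X" "p \<noteq> q" "p \<in> l" "q \<in> l" for l p q
    using that unfolding span_def subspace_def by blast
  ultimately show ?thesis unfolding subspace_def by blast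
qed

lemma span_span: "X \<subseteq> P \<Longrightarrow> sp (sp X) = sp X"
  using span_least[OF subspace_span] span_inc span_sub_P' by (meson subset_antisym)

lemma span_single: "p \<in> P \<Longrightarrow> sp {p} = {p}"
proof -
  assume p: "p \<in> P"
  have "subspace P L {p}" using p unfolding subspace_def by blast
  then show ?thesis using span_least[of P L "{p}" "{p}"] span_inc[of "{p}"] p by blast
qed

lemma span_subset_span: "X \<subseteq> P \<Longrightarrow> Y \<subseteq> sp X \<Longrightarrow> sp Y \<subseteq> sp X"
  using span_least subspace_span by blast

lemma exch:
  assumes "Z \<subseteq> P" "p1 \<in> P" "p1 \<notin> sp Z" "p2 \<in> P" "p2 \<notin> sp Z" "p2 \<in> sp (insert p1 Z)"
  shows "p1 \<in> sp (insert p2 Z)"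
  using EX assms unfolding exchange_axiom_def by blast

lemma indep_alt: "independent P L X \<longleftrightarrow> X \<subseteq> P \<and> (\<forall>x\<in>X. x \<notin> sp (X - {x}))"
proof
  assume I: "independent P L X"
  then have X: "X \<subseteq> P" unfolding independent_def by blast
  have "x \<notin> sp (X - {x})" if x: "x \<in> X" for x
  proof
    assume xs: "x \<in> sp (X - {x})"
    have "X \<subseteq> sp (X - {x})" using xs span_inc[of "X - {x}"] X by blast
    then have "sp X \<subseteq> sp (X - {x})" using span_subset_span[of "X - {x}" X] X by blast
    moreover have "sp (X - {x}) \<subseteq> sp X" by (rule span_mono) blast
    ultimately have "sp (X - {x}) = sp X" by blast
    moreover have "X - {x} \<subset> X" using x by blast
    ultimately show False using I unfolding independent_def by blast
  qed
  then show "X \<subseteq> P \<and> (\<forall>x\<in>X. x \<notin> sp (X - {x}))" using X by blast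
next
  assume A: "X \<subseteq> P \<and> (\<forall>x\<in>X. x \<notin> sp (X - {x}))"
  have "sp Y \<noteq> sp X" if YX: "Y \<subset> X" for Y
  proof -
    obtain x where x: "x \<in> X" "x \<notin> Y" using YX by blast
    have "sp Y \<subseteq> sp (X - {x})" using YX x by (intro span_mono) blast
    moreover have "x \<in> sp X" using x span_inc A by blast
    ultimately show ?thesis using A x by blast
  qed
  then show "independent P L X" using A unfolding independent_def by blast
qed

lemma indep_P: "independent P L X \<Longrightarrow> X \<subseteq> P"
  unfolding independent_def by blast

lemma indep_notin: "independent P L X \<Longrightarrow> x \<in> X \<Longrightarrow> Y \<subseteq> X - {x} \<Longrightarrow> x \<notin> sp Y"
  using indep_alt span_mono by blast

lemma indep_subset: "independent P L X \<Longrightarrow> Y \<subseteq> X \<Longrightarrow> independent P L Y"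
  unfolding indep_alt using span_mono by (metis Diff_mono order_refl subset_iff)

lemma indep_insert:
  assumes I: "independent P L I" and y: "y \<in> P" "y \<notin> sp I"
  shows "independent P L (insert y I)"
proof -
  have IP: "I \<subseteq> P" using I indep_P by blast
  have yI: "y \<notin> I" using y span_inc IP by blast
  have "z \<notin> sp (insert y I - {z})" if z: "z \<in> insert y I" for z
  proof (cases "z = y")
    case True
    then show ?thesis using y yI by (simp add: insert_Diff_if)
  next
    case False
    then have zI: "z \<in> I" using z by blast
    have eq: "insert y I - {z} = insert y (I - {z})" using False by blast
    show ?thesis
    proof
      assume "z \<in> sp (insert y I - {z})"
      then have zs: "z \<in> sp (insert y (I - {z}))" using eq by simp
      have "z \<notin> sp (I - {z})" using I zI indep_alt by blast
      moreover have "y \<notin> sp (I - {z})" using y span_mono[of "I - {z}" I] by blast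
      ultimately have "y \<in> sp (insert z (I - {z}))"
        using exch[of "I - {z}" y z] IP zI y zs by blast
      then show False using y zI by (simp add: insert_absorb)
    qed
  qed
  then show ?thesis using IP y unfolding indep_alt by blast
qed

lemma steinitz_fin:
  assumes "finite X" "independent P L X" "X \<subseteq> sp Y" "finite Y" "Y \<subseteq> P"
  shows "card X \<le> card Y"
  using assms
proof (induction "card (X - Y)" arbitrary: X rule: less_induct)
  case less
  show ?case
  proof (cases "X \<subseteq> Y")
    case True
    then show ?thesis using less(5) card_mono by blast
  next
    case False
    then obtain x where x: "x \<in> X" "x \<notin> Y" by blast
    have XP: "X \<subseteq> P" using less(3) indep_P by blast
    have nx: "x \<notin> sp (X - {x})" using less(3) x indep_alt by blast
    have "\<not> Y \<subseteq> sp (X - {x})"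
    proof
      assume "Y \<subseteq> sp (X - {x})"
      then have "sp Y \<subseteq> sp (X - {x})" using span_subset_span[of "X - {x}" Y] XP by blast
      then show False using nx x less(4) span_inc[OF less(6)] by blast
    qed
    then obtain y where y: "y \<in> Y" "y \<notin> sp (X - {x})" by blast
    have yP: "y \<in> P" using y less(6) by blast
    have yX: "y \<notin> X - {x}" using y span_inc[of "X - {x}"] XP by blast
    define X' where "X' = insert y (X - {x})"
    have iX': "independent P L X'" unfolding X'_def
      using indep_insert[OF indep_subset[OF less(3)] yP] y by blast
    have fX': "finite X'" using less(2) X'_def by simp
    have c1: "card X' = Suc (card (X - {x}))" unfolding X'_def using yX less(2) by simp
    have "card X > 0" using less(2) x(1) card_gt_0_iff by blast
    then have cX': "card X' = card X" using c1 x(1) less(2) by simp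
    have sX': "X' \<subseteq> sp Y" using less(4) y span_inc[OF less(6)] X'_def by blast
    have "X' - Y = (X - Y) - {x}" unfolding X'_def using y by blast
    then have "card (X' - Y) < card (X - Y)" using x less(2)
      by (metis Diff_iff card_Diff1_less finite_Diff)
    then show ?thesis using less(1)[OF _ fX' iX' sX' less(5,6)] cX' by simp
  qed
qed

lemma steinitz:
  assumes "independent P L X" "X \<subseteq> sp Y" "finite Y" "Y \<subseteq> P"
  shows "finite X \<and> card X \<le> card Y"
proof (cases "finite X")
  case True
  then show ?thesis using steinitz_fin assms by blast
next
  case False
  then obtain X0 where X0: "X0 \<subseteq> X" "card X0 = Suc (card Y)" "finite X0"
    using infinite_arbitrarily_large by blast
  have "card X0 \<le> card Y" using steinitz_fin[OF X0(3) indep_subset[OF assms(1) X0(1)]] assms X0 by blast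
  then show ?thesis using X0 by simp
qed

lemma span_inter:
  assumes I: "independent P L I" and "finite X" "X \<subseteq> I" "Y \<subseteq> I"
  shows "sp X \<inter> sp Y = sp (X \<inter> Y)"
  using assms(2-4)
proof (induction "card (X - Y)" arbitrary: X rule: less_induct)
  case less
  have IP: "I \<subseteq> P" using I indep_P by blast
  show ?case
  proof (cases "X \<subseteq> Y")
    case True
    then have "X \<inter> Y = X" by blast
    then show ?thesis using span_mono[OF True] by auto
  next
    case False
    then obtain x where x: "x \<in> X" "x \<notin> Y" by blast
    have lt: "card ((X - {x}) - Y) < card (X - Y)"
    proof -
      have "(X - {x}) - Y = (X - Y) - {x}" by blast
      moreover have "x \<in> X - Y" using x by blast
      moreover have "finite (X - Y)" using less(2) by simp
      ultimately show ?thesis using card_Diff1_less[of "X - Y" x] by simp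
    qed
    have IH: "sp (X - {x}) \<inter> sp Y = sp ((X - {x}) \<inter> Y)"
    proof -
      have "finite (X - {x})" using less(2) by simp
      moreover have "X - {x} \<subseteq> I" using less(3) by blast
      ultimately show ?thesis using less(1)[OF lt _ _ less(4)] by blast
    qed
    have eq: "(X - {x}) \<inter> Y = X \<inter> Y" using x by blast
    have "p \<in> sp (X \<inter> Y)" if p: "p \<in> sp X" "p \<in> sp Y" for p
    proof (cases "p \<in> sp (X - {x})")
      case True
      then have "p \<in> sp (X - {x}) \<inter> sp Y" using p by blast
      then show ?thesis using IH eq by simp
    next
      case False
      have XP0: "X \<subseteq> P" using less(3) IP by (rule subset_trans)
      have XP: "X - {x} \<subseteq> P" using XP0 by blast
      have xI: "x \<in> I" using x(1) less(3) by blast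
      have "X - {x} \<subseteq> I - {x}" using less(3) by blast
      then have nx: "x \<notin> sp (X - {x})" by (rule indep_notin[OF I xI])
      have pP: "p \<in> P" using p(1) span_sub_P'[OF XP0] by blast
      have xP: "x \<in> P" using x(1) XP0 by blast
      have "p \<in> sp (insert x (X - {x}))" using p x by (simp add: insert_absorb)
      then have xs: "x \<in> sp (insert p (X - {x}))"
        using exch[OF XP xP nx pP False] by blast
      have YI: "(X - {x}) \<union> Y \<subseteq> I - {x}" using less(3,4) x(2) by blast
      have YP: "(X - {x}) \<union> Y \<subseteq> P" using YI IP by blast
      have "insert p (X - {x}) \<subseteq> sp ((X - {x}) \<union> Y)"
      proof -
        have "sp Y \<subseteq> sp ((X - {x}) \<union> Y)" by (rule span_mono) blast
        moreover have "X - {x} \<subseteq> sp ((X - {x}) \<union> Y)" using span_inc[OF YP] by blast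
        ultimately show ?thesis using p(2) by blast
      qed
      then have "sp (insert p (X - {x})) \<subseteq> sp ((X - {x}) \<union> Y)" by (rule span_subset_span[OF YP])
      then have "x \<in> sp ((X - {x}) \<union> Y)" using xs by blast
      moreover have "x \<notin> sp ((X - {x}) \<union> Y)" using YI by (rule indep_notin[OF I xI])
      ultimately show ?thesis by blast
    qed
    moreover have "sp (X \<inter> Y) \<subseteq> sp X \<inter> sp Y" using span_mono[of "X \<inter> Y" X] span_mono[of "X \<inter> Y" Y] by blast
    ultimately show ?thesis by blast
  qed
qed

end


lemma has_dim_uniq: assumes "has_dim P L S a" "has_dim P L S b" shows "a = b"
proof -
  obtain Xa where Xa: "Xa \<subseteq> P" "finite Xa" "card Xa = a + 1" "span P L Xa = S"
    using assms(1) unfolding has_dim_def by blast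
  obtain Xb where Xb: "Xb \<subseteq> P" "finite Xb" "card Xb = b + 1" "span P L Xb = S"
    using assms(2) unfolding has_dim_def by blast
  have "b + 1 \<le> card Xa" using assms(2) Xa unfolding has_dim_def by blast
  moreover have "a + 1 \<le> card Xb" using assms(1) Xb unfolding has_dim_def by blast
  ultimately show ?thesis using Xa(3) Xb(3) by simp
qed

context ls
begin

lemma repl:
  assumes "Z \<subseteq> P" "a \<in> P" "q \<in> P" "a \<notin> sp Z" "q \<notin> sp Z" "q \<in> sp (insert a Z)"
  shows "sp (insert q Z) = sp (insert a Z)"
proof -
  have a: "a \<in> sp (insert q Z)" using exch[of Z a q] assms by blast
  have Zq: "insert q Z \<subseteq> P" and Za: "insert a Z \<subseteq> P" using assms by auto
  have "insert a Z \<subseteq> sp (insert q Z)" using a span_inc[OF Zq] by blast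
  then have 1: "sp (insert a Z) \<subseteq> sp (insert q Z)" by (rule span_subset_span[OF Zq])
  have "insert q Z \<subseteq> sp (insert a Z)" using assms(6) span_inc[OF Za] by blast
  then have 2: "sp (insert q Z) \<subseteq> sp (insert a Z)" by (rule span_subset_span[OF Za])
  show ?thesis using 1 2 by (rule subset_antisym[rotated])
qed

lemma not_dim_empty: "\<not> has_dim P L {} m"
proof
  assume "has_dim P L {} m"
  then obtain X where X: "X \<subseteq> P" "finite X" "card X = m + 1" "span P L X = {}"
    unfolding has_dim_def by blast
  have "X \<subseteq> {}" using span_inc[OF X(1)] X(4) by simp
  then show False using X(3) by simp
qed

lemma dim_span:
  assumes I: "independent P L Z" and f: "finite Z" and ne: "Z \<noteq> {}"
  shows "has_dim P L (sp Z) (card Z - 1)"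
proof -
  have ZP: "Z \<subseteq> P" using I by (rule indep_P)
  have "card Z > 0" using f ne by (simp add: card_gt_0_iff)
  then have c: "card Z - 1 + 1 = card Z" by simp
  have m: "card Z - 1 + 1 \<le> card X" if X: "X \<subseteq> P \<and> finite X \<and> sp X = sp Z" for X
  proof -
    have "Z \<subseteq> sp X" using span_inc[OF ZP] X by simp
    then have "card Z \<le> card X" using steinitz[OF I _ _ _] X by blast
    then show ?thesis using c by simp
  qed
  have e: "Z \<subseteq> P \<and> finite Z \<and> card Z = card Z - 1 + 1 \<and> sp Z = sp Z" using ZP f c by simp
  show ?thesis unfolding has_dim_def
  proof (intro conjI)
    show "subspace P L (sp Z)" using ZP by (rule subspace_span)
    show "\<exists>X. X \<subseteq> P \<and> finite X \<and> card X = card Z - 1 + 1 \<and> sp X = sp Z"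
      using e by (rule exI[of _ Z])
    show "\<forall>X. X \<subseteq> P \<and> finite X \<and> sp X = sp Z \<longrightarrow> card Z - 1 + 1 \<le> card X"
      using m by blast
  qed
qed

lemma dim_span_iff:
  assumes I: "independent P L Z" and f: "finite Z"
  shows "has_dim P L (sp Z) m \<longleftrightarrow> Z \<noteq> {} \<and> card Z = m + 1"
proof
  assume h: "has_dim P L (sp Z) m"
  have ne: "Z \<noteq> {}"
  proof
    assume "Z = {}"
    then have "sp Z = {}" using span_empty by simp
    then show False using h not_dim_empty by simp
  qed
  have "m = card Z - 1" using has_dim_uniq[OF h dim_span[OF I f ne]] .
  moreover have "card Z > 0" using f ne by (simp add: card_gt_0_iff)
  ultimately show "Z \<noteq> {} \<and> card Z = m + 1" using ne by simp
next
  assume a: "Z \<noteq> {} \<and> card Z = m + 1"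
  then have "has_dim P L (sp Z) (card Z - 1)" using dim_span[OF I f] by blast
  then show "has_dim P L (sp Z) m" using a by simp
qed

lemma inter_fam:
  assumes I: "independent P L I" and J: "finite J" "J \<noteq> {}"
    and X: "\<And>j. j \<in> J \<Longrightarrow> finite (X j) \<and> X j \<subseteq> I"
  shows "(\<Inter>j\<in>J. sp (X j)) = sp (\<Inter>j\<in>J. X j)"
  using J X
proof (induction J rule: finite_ne_induct)
  case (singleton x)
  then show ?case by simp
next
  case (insert j J)
  have IH: "(\<Inter>j\<in>J. sp (X j)) = sp (\<Inter>j\<in>J. X j)" using insert by blast
  have fj: "finite (X j)" "X j \<subseteq> I" using insert.prems by auto
  have "(\<Inter>j\<in>J. X j) \<subseteq> I" using insert by blast
  then have "sp (X j) \<inter> sp (\<Inter>j\<in>J. X j) = sp (X j \<inter> (\<Inter>j\<in>J. X j))"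
    using span_inter[OF I fj(1) fj(2)] by blast
  then show ?case using IH by simp
qed

end

locale bs = ls +
  fixes B :: "'a set" and n k :: nat
  assumes base: "is_base P L B" and finB: "finite B" and cardB: "card B = n + 1"
    and k0: "0 < k" and kn: "k < n - 1"
begin

abbreviation Bk where "Bk \<equiv> base_subset P L k B"

definition Cab where "Cab a b = {U \<in> Bk. a \<in> U \<and> b \<notin> U}"

lemma BI: "independent P L B" using base unfolding is_base_def by blast
lemma spB: "sp B = P" using base unfolding is_base_def by blast
lemma BP: "B \<subseteq> P" using BI indep_P by blast

lemma indepB: "X \<subseteq> B \<Longrightarrow> independent P L X"
  using BI indep_subset by blast

lemma finB': "X \<subseteq> B \<Longrightarrow> finite X"
  using finB finite_subset by blast

lemma span_cap_B: assumes "X \<subseteq> B" shows "sp X \<inter> B = X"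
proof
  show "X \<subseteq> sp X \<inter> B" using span_inc assms BP by blast
  show "sp X \<inter> B \<subseteq> X"
  proof
    fix e assume e: "e \<in> sp X \<inter> B"
    show "e \<in> X"
    proof (rule ccontr)
      assume "e \<notin> X"
      then have "X \<subseteq> B - {e}" using assms by blast
      then have "e \<notin> sp X" using indep_notin[OF BI] e by blast
      then show False using e by blast
    qed
  qed
qed

lemma span_mem_B: "X \<subseteq> B \<Longrightarrow> e \<in> B \<Longrightarrow> e \<in> sp X \<longleftrightarrow> e \<in> X"
  using span_cap_B by blast

lemma Bk_iff: "U \<in> Bk \<longleftrightarrow> (\<exists>X. X \<subseteq> B \<and> card X = k + 1 \<and> U = sp X)"
proof
  assume U: "U \<in> Bk"
  then obtain X where X: "X \<subseteq> B" "sp X = U" "has_dim P L U k"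
    unfolding base_subset_def grass_def by blast
  then have "X \<noteq> {} \<and> card X = k + 1" using dim_span_iff[OF indepB[OF X(1)] finB'[OF X(1)]] by simp
  then show "\<exists>X. X \<subseteq> B \<and> card X = k + 1 \<and> U = sp X" using X by blast
next
  assume "\<exists>X. X \<subseteq> B \<and> card X = k + 1 \<and> U = sp X"
  then obtain X where X: "X \<subseteq> B" "card X = k + 1" "U = sp X" by blast
  have "X \<noteq> {}" using X(2) by auto
  then have "has_dim P L U k" using dim_span_iff[OF indepB[OF X(1)] finB'[OF X(1)]] X by simp
  then show "U \<in> Bk" unfolding base_subset_def grass_def using X by blast
qed

lemma Bk_span: "X \<subseteq> B \<Longrightarrow> card X = k + 1 \<Longrightarrow> sp X \<in> Bk"
  using Bk_iff by blast

lemma Bk_cap: assumes "U \<in> Bk"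
  shows "U \<inter> B \<subseteq> B" "card (U \<inter> B) = k + 1" "U = sp (U \<inter> B)"
proof -
  obtain X where X: "X \<subseteq> B" "card X = k + 1" "U = sp X" using assms Bk_iff by blast
  have "U \<inter> B = X" using X span_cap_B by simp
  then show "U \<inter> B \<subseteq> B" "card (U \<inter> B) = k + 1" "U = sp (U \<inter> B)" using X by auto
qed

lemma Cab_span: "X \<subseteq> B \<Longrightarrow> card X = k + 1 \<Longrightarrow> a \<in> B \<Longrightarrow> b \<in> B \<Longrightarrow>
   sp X \<in> Cab a b \<longleftrightarrow> a \<in> X \<and> b \<notin> X"
  unfolding Cab_def using Bk_span span_mem_B by blast

lemma Cab_sub: "Cab a b \<subseteq> Bk" unfolding Cab_def by blast

lemma n3: "3 \<le> n" using k0 kn by linarith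

lemma witness:
  assumes "In \<subseteq> B" "Out \<subseteq> B" "In \<inter> Out = {}" "card In \<le> k + 1" "k + 1 + card Out \<le> card B"
  shows "\<exists>X. X \<subseteq> B \<and> In \<subseteq> X \<and> X \<inter> Out = {} \<and> card X = k + 1"
proof -
  have fO: "finite Out" using assms(2) finB' by blast
  have c: "card (B - Out) = card B - card Out" using assms(2) fO by (simp add: card_Diff_subset)
  have "In \<subseteq> B - Out" using assms by blast
  moreover have "k + 1 \<le> card (B - Out)" using c assms(5) by linarith
  ultimately obtain T where "In \<subseteq> T" "T \<subseteq> B - Out" "card T = k + 1"
    using between_card[of "B - Out" In "k + 1"] finB assms(4) by blast
  then show ?thesis by blast
qed

lemma Cab_sep:
  assumes "a \<in> B" "b \<in> B" "c \<in> B" "d \<in> B" "a \<noteq> b" "c \<noteq> d" "(a, b) \<noteq> (c, d)"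
  shows "\<exists>U. U \<in> Cab c d \<and> U \<notin> Cab a b"
proof (cases "b = d")
  case False
  have "card {c, b} \<le> k + 1" using k0 by (simp add: card_insert_if)
  moreover have "k + 1 + card {d} \<le> card B" using cardB kn by simp
  moreover have "{c, b} \<inter> {d} = {}" using False assms by auto
  ultimately obtain X where X: "X \<subseteq> B" "{c, b} \<subseteq> X" "X \<inter> {d} = {}" "card X = k + 1"
    using witness[of "{c, b}" "{d}"] assms by blast
  show ?thesis using X Cab_span[of X] assms by (intro exI[of _ "sp X"]) auto
next
  case True
  then have ca: "c \<noteq> a" using assms by auto
  have "card {c} \<le> k + 1" by simp
  moreover have "k + 1 + card {a, b} \<le> card B" using cardB kn assms by simp
  moreover have "{c} \<inter> {a, b} = {}" using True ca assms by auto
  ultimately obtain X where X: "X \<subseteq> B" "{c} \<subseteq> X" "X \<inter> {a, b} = {}" "card X = k + 1"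
    using witness[of "{c}" "{a, b}"] assms by blast
  show ?thesis using X Cab_span[of X] assms True by (intro exI[of _ "sp X"]) auto
qed

end


context bs
begin

lemma exact_crit:
  assumes S: "S \<subseteq> Bk" and H: "\<And>a b. a \<in> B \<Longrightarrow> b \<in> B \<Longrightarrow> a \<noteq> b \<Longrightarrow> S \<inter> Cab a b \<noteq> {}"
  shows "exact P L k B S"
  unfolding exact_def
proof (intro conjI allI impI)
  show "S \<subseteq> Bk" by (rule S)
  fix B' assume h: "is_base P L B' \<and> S \<subseteq> base_subset P L k B'"
  have B'I: "independent P L B'" using h unfolding is_base_def by blast
  have spB': "sp B' = P" using h unfolding is_base_def by blast
  have B'P: "B' \<subseteq> P" using B'I by (rule indep_P)
  have "B' \<subseteq> sp B" using spB B'P by simp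
  then have finB'': "finite B'" using steinitz[OF B'I _ finB BP] by blast
  have sub: "B \<subseteq> B'"
  proof
    fix i assume i: "i \<in> B"
    define J where "J = B - {i}"
    have fJ: "finite J" using finB J_def by simp
    have "card J = n" using i cardB J_def finB by simp
    then have Jne: "J \<noteq> {}" using n3 by auto
    have "\<forall>j\<in>J. \<exists>U. U \<in> S \<inter> Cab i j" using H i J_def by blast
    then obtain f where f: "\<And>j. j \<in> J \<Longrightarrow> f j \<in> S \<inter> Cab i j" by metis
    have fk: "\<And>j. j \<in> J \<Longrightarrow> f j \<in> Bk" using f S by blast
    have "\<forall>j\<in>J. \<exists>X. X \<subseteq> B' \<and> sp X = f j" using f h unfolding base_subset_def by blast
    then obtain g where g: "\<And>j. j \<in> J \<Longrightarrow> g j \<subseteq> B' \<and> sp (g j) = f j" by metis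
    have e1: "(\<Inter>j\<in>J. sp (f j \<inter> B)) = sp (\<Inter>j\<in>J. f j \<inter> B)"
    proof (rule inter_fam[OF BI fJ Jne])
      fix j assume "j \<in> J"
      show "finite (f j \<inter> B) \<and> f j \<inter> B \<subseteq> B" using finB by simp
    qed
    have e2: "(\<Inter>j\<in>J. sp (f j \<inter> B)) = (\<Inter>j\<in>J. f j)"
    proof (rule INF_cong[OF refl])
      fix j assume "j \<in> J"
      then show "sp (f j \<inter> B) = f j" using Bk_cap(3)[OF fk] by metis
    qed
    have e3: "(\<Inter>j\<in>J. sp (g j)) = sp (\<Inter>j\<in>J. g j)"
    proof (rule inter_fam[OF B'I fJ Jne])
      fix j assume "j \<in> J"
      then have "g j \<subseteq> B'" using g by blast
      then show "finite (g j) \<and> g j \<subseteq> B'" using finB'' finite_subset by blast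
    qed
    have e4: "(\<Inter>j\<in>J. sp (g j)) = (\<Inter>j\<in>J. f j)"
    proof (rule INF_cong[OF refl])
      fix j assume "j \<in> J"
      then show "sp (g j) = f j" using g by blast
    qed
    have Zi: "(\<Inter>j\<in>J. f j \<inter> B) = {i}"
    proof
      show "{i} \<subseteq> (\<Inter>j\<in>J. f j \<inter> B)"
      proof
        fix y assume "y \<in> {i}"
        then have y: "y = i" by simp
        have "\<And>j. j \<in> J \<Longrightarrow> i \<in> f j" using f unfolding Cab_def by blast
        then show "y \<in> (\<Inter>j\<in>J. f j \<inter> B)" using y i by blast
      qed
      show "(\<Inter>j\<in>J. f j \<inter> B) \<subseteq> {i}"
      proof
        fix e assume e: "e \<in> (\<Inter>j\<in>J. f j \<inter> B)"
        show "e \<in> {i}"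
        proof (rule ccontr)
          assume "e \<notin> {i}"
          moreover have "e \<in> B" using e Jne by blast
          ultimately have eJ: "e \<in> J" using J_def by blast
          then have "e \<notin> f e" using f unfolding Cab_def by blast
          moreover have "e \<in> f e" using e eJ by blast
          ultimately show False by blast
        qed
      qed
    qed
    have iP: "i \<in> P" using i BP by blast
    have "sp (\<Inter>j\<in>J. g j) = {i}" using e1 e2 e3 e4 Zi span_single[OF iP] by simp
    moreover have ZB': "(\<Inter>j\<in>J. g j) \<subseteq> B'" using g Jne by blast
    ultimately have Z: "sp (\<Inter>j\<in>J. g j) = {i}" "(\<Inter>j\<in>J. g j) \<subseteq> P" using B'P by auto
    have "(\<Inter>j\<in>J. g j) \<subseteq> {i}" using span_inc[OF Z(2)] Z(1) by simp
    moreover have "(\<Inter>j\<in>J. g j) \<noteq> {}"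
    proof
      assume "(\<Inter>j\<in>J. g j) = {}"
      then have "sp (\<Inter>j\<in>J. g j) = {}" by (simp add: span_empty)
      then show False using Z(1) by simp
    qed
    ultimately have "(\<Inter>j\<in>J. g j) = {i}" by blast
    then show "i \<in> B'" using ZB' by blast
  qed
  have "B = B'"
  proof (rule ccontr)
    assume "B \<noteq> B'"
    then have "B \<subset> B'" using sub by blast
    then have "sp B \<noteq> sp B'" using B'I unfolding independent_def by blast
    then show False using spB spB' by simp
  qed
  then show "base_subset P L k B' = Bk" by simp
qed

end


context bs
begin

lemma inexact_Cab:
  assumes P2: "axiom_P2 L" and ab: "a \<in> B" "b \<in> B" "a \<noteq> b"
  shows "inexact P L k B (Bk - Cab a b)"
proof -
  have aP: "a \<in> P" "b \<in> P" using ab BP by auto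
  have "\<forall>p\<in>P. \<forall>q\<in>P. p \<noteq> q \<longrightarrow> (\<exists>!l. l \<in> L \<and> p \<in> l \<and> q \<in> l)"
    using LS unfolding linear_space_def by (rule conjunct2)
  then have "\<exists>!l. l \<in> L \<and> a \<in> l \<and> b \<in> l" using aP ab(3) by simp
  then obtain l where l: "l \<in> L" "a \<in> l" "b \<in> l" by (elim ex1E) blast
  have "\<exists>x\<in>l. \<exists>y\<in>l. \<exists>z\<in>l. x \<noteq> y \<and> x \<noteq> z \<and> y \<noteq> z" using P2 l(1) unfolding axiom_P2_def by blast
  then obtain x y z where xyz: "x \<in> l" "y \<in> l" "z \<in> l" "x \<noteq> y" "x \<noteq> z" "y \<noteq> z" by blast
  have "\<exists>q. q \<in> l \<and> q \<noteq> a \<and> q \<noteq> b"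
  proof (cases "x \<noteq> a \<and> x \<noteq> b")
    case True then show ?thesis using xyz by blast
  next
    case False
    show ?thesis
    proof (cases "y \<noteq> a \<and> y \<noteq> b")
      case True then show ?thesis using xyz by blast
    next
      case False2: False
      have "z \<noteq> a \<and> z \<noteq> b" using False False2 xyz by metis
      then show ?thesis using xyz by blast
    qed
  qed
  then obtain q where q: "q \<in> l" "q \<noteq> a" "q \<noteq> b" by blast
  have lP: "l \<subseteq> P" using LS l(1) unfolding linear_space_def by blast
  have qP: "q \<in> P" using q lP by blast
  have abP: "{a, b} \<subseteq> P" using aP by blast
  have "subspace P L (sp {a, b})" using abP by (rule subspace_span)
  moreover have "a \<in> sp {a, b}" "b \<in> sp {a, b}" using span_inc[OF abP] by auto
  ultimately have "l \<subseteq> sp {a, b}" using l ab(3) unfolding subspace_def by blast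
  then have qab: "q \<in> sp {a, b}" using q by blast
  have "sp {a, b} \<inter> sp (B - {a}) = sp ({a, b} \<inter> (B - {a}))"
    by (rule span_inter[OF BI]) (use ab in auto)
  moreover have "{a, b} \<inter> (B - {a}) = {b}" using ab by blast
  ultimately have "sp {a, b} \<inter> sp (B - {a}) = {b}" using span_single[OF aP(2)] by simp
  then have qnot0: "q \<notin> sp (B - {a})" using qab q by blast
  have qnot: "q \<notin> sp Z" if "Z \<subseteq> B - {a}" for Z
    using span_mono[OF that] qnot0 by blast
  have BaP: "B - {a} \<subseteq> P" using BP by blast
  have qB: "q \<notin> B - {a}" using span_inc[OF BaP] qnot0 by blast
  define B' where "B' = insert q (B - {a})"
  have B'P: "B' \<subseteq> P" unfolding B'_def using BP qP by blast
  have B'I: "independent P L B'"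
    unfolding indep_alt
  proof (intro conjI ballI)
    show "B' \<subseteq> P" by (rule B'P)
    fix y assume y: "y \<in> B'"
    show "y \<notin> sp (B' - {y})"
    proof (cases "y = q")
      case True
      then have "B' - {y} = B - {a}" unfolding B'_def using qB by blast
      then show ?thesis using True qnot0 by simp
    next
      case False
      then have yB: "y \<in> B - {a}" using y unfolding B'_def by blast
      define Z where "Z = B - {a, y}"
      have ZP: "Z \<subseteq> P" unfolding Z_def using BP by blast
      have eq: "B' - {y} = insert q Z" unfolding B'_def Z_def using False by blast
      have qZ: "q \<notin> sp Z" by (rule qnot) (auto simp: Z_def)
      have yP: "y \<in> P" using yB BP by blast
      have yZ: "y \<notin> sp Z" by (rule indep_notin[OF BI]) (use yB in \<open>auto simp: Z_def\<close>)
      show ?thesis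
      proof
        assume "y \<in> sp (B' - {y})"
        then have "y \<in> sp (insert q Z)" using eq by simp
        then have "q \<in> sp (insert y Z)" using exch[OF ZP qP qZ yP yZ] by blast
        moreover have "insert y Z = B - {a}" unfolding Z_def using yB by blast
        ultimately show False using qnot0 by simp
      qed
    qed
  qed
  have aB: "a \<notin> sp (B - {a})" by (rule indep_notin[OF BI ab(1)]) blast
  have ins: "insert a (B - {a}) = B" using ab by blast
  have "sp (insert q (B - {a})) = sp (insert a (B - {a}))"
  proof (rule repl[OF BaP aP(1) qP aB qnot0])
    show "q \<in> sp (insert a (B - {a}))" using ins spB qP by simp
  qed
  then have spB': "sp B' = P" unfolding B'_def using ins spB by simp
  have base': "is_base P L B'" unfolding is_base_def using B'I spB' by blast
  have sub: "Bk - Cab a b \<subseteq> base_subset P L k B'"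
  proof
    fix U assume U: "U \<in> Bk - Cab a b"
    then have UB: "U \<in> Bk" by blast
    have Ug: "U \<in> grass P L k" using UB unfolding base_subset_def by blast
    define X where "X = U \<inter> B"
    have X: "X \<subseteq> B" "card X = k + 1" "U = sp X" using Bk_cap[OF UB] X_def by auto
    have ab': "a \<in> U \<longrightarrow> b \<in> U" using U unfolding Cab_def by blast
    show "U \<in> base_subset P L k B'"
    proof (cases "a \<in> X")
      case False
      then have "X \<subseteq> B'" using X(1) unfolding B'_def by blast
      then show ?thesis unfolding base_subset_def using Ug X(3) by blast
    next
      case True
      then have bX: "b \<in> X" using ab' X_def ab by blast
      define Z where "Z = X - {a}"
      have ZP: "Z \<subseteq> P" unfolding Z_def using X(1) BP by blast
      have aZ: "a \<notin> sp Z" by (rule indep_notin[OF BI ab(1)]) (use X(1) in \<open>auto simp: Z_def\<close>)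
      have qZ: "q \<notin> sp Z" by (rule qnot) (use X(1) in \<open>auto simp: Z_def\<close>)
      have insZ: "insert a Z = X" unfolding Z_def using True by blast
      have "sp {a, b} \<subseteq> sp X" by (rule span_mono) (use True bX in blast)
      then have "q \<in> sp (insert a Z)" using qab insZ by blast
      then have "sp (insert q Z) = sp (insert a Z)" by (rule repl[OF ZP aP(1) qP aZ qZ])
      then have "sp (insert q Z) = U" using insZ X(3) by simp
      moreover have "insert q Z \<subseteq> B'" unfolding B'_def Z_def using X(1) by blast
      ultimately show ?thesis unfolding base_subset_def using Ug by blast
    qed
  qed
  have ne: "base_subset P L k B' \<noteq> Bk"
  proof -
    have "card (B - {a, b}) = n - 1" using ab cardB finB by (simp add: card_Diff_subset)
    then have "k \<le> card (B - {a, b})" using kn by simp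
    then obtain Z where Z: "Z \<subseteq> B - {a, b}" "card Z = k" "finite Z"
      by (rule obtain_subset_with_card_n)
    have qZ: "q \<notin> Z" using Z(1) qB by blast
    have QB': "insert q Z \<subseteq> B'" unfolding B'_def using Z(1) by blast
    have QI: "independent P L (insert q Z)" using B'I QB' by (rule indep_subset)
    have cQ: "card (insert q Z) = k + 1" using qZ Z by simp
    have "has_dim P L (sp (insert q Z)) k"
      using dim_span_iff[OF QI] Z(3) cQ by simp
    then have Vin: "sp (insert q Z) \<in> base_subset P L k B'"
      unfolding base_subset_def grass_def using QB' by blast
    have "sp (insert q Z) \<notin> Bk"
    proof
      assume V: "sp (insert q Z) \<in> Bk"
      define Y where "Y = sp (insert q Z) \<inter> B"
      have Y: "Y \<subseteq> B" "card Y = k + 1" "sp (insert q Z) = sp Y" using Bk_cap[OF V] Y_def by auto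
      define W where "W = insert a (insert b Z)"
      have WB: "W \<subseteq> B" unfolding W_def using Z(1) ab by blast
      have WP: "W \<subseteq> P" using WB BP by blast
      have "sp {a, b} \<subseteq> sp W" by (rule span_mono) (auto simp: W_def)
      then have "insert q Z \<subseteq> sp W" using qab span_inc[OF WP] unfolding W_def by blast
      then have "sp (insert q Z) \<subseteq> sp W" by (rule span_subset_span[OF WP])
      then have "Y \<subseteq> sp W \<inter> B" using Y_def by blast
      then have YW: "Y \<subseteq> W" using span_cap_B[OF WB] by simp
      have QP: "insert q Z \<subseteq> P" using QB' B'P by (rule subset_trans)
      have "Z \<subseteq> sp (insert q Z)" using span_inc[OF QP] by blast
      moreover have "Z \<subseteq> B" using Z(1) by blast
      ultimately have ZY: "Z \<subseteq> Y" unfolding Y_def by blast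
      have fY: "finite Y" using Y(1) by (rule finB')
      have "card (Y - Z) = card Y - card Z" by (rule card_Diff_subset[OF Z(3) ZY])
      then have "card (Y - Z) = 1" using Y(2) Z(2) by simp
      then obtain e where e: "Y - Z = {e}" by (auto simp: card_1_singleton_iff)
      have abZ: "a \<notin> Z" "b \<notin> Z" using Z(1) by auto
      have eY: "e \<in> Y" "e \<notin> Z" using e by auto
      then have "e \<in> W" using YW by blast
      then have eab: "e \<in> {a, b}" using eY(2) unfolding W_def by blast
      have "{a, b} \<inter> Y = {a, b} \<inter> (Y - Z)" using abZ by blast
      then have Yab: "{a, b} \<inter> Y = {e}" using e eab by simp
      have "sp {a, b} \<inter> sp Y = sp ({a, b} \<inter> Y)"
        by (rule span_inter[OF BI]) (use ab Y(1) in auto)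
      moreover have "e \<in> P" using eab aP by blast
      ultimately have "sp {a, b} \<inter> sp Y = {e}" using Yab span_single by simp
      moreover have "q \<in> sp Y" using Y(3) span_inc[OF QP] by blast
      ultimately have "q = e" using qab by blast
      then show False using eab q by blast
    qed
    then show ?thesis using Vin by blast
  qed
  have "\<not> exact P L k B (Bk - Cab a b)"
    unfolding exact_def using base' sub ne by blast
  then show ?thesis unfolding inexact_def by blast
qed

end


context bs
begin

lemma comp_char:
  assumes P2: "axiom_P2 L"
  shows "complement_subset P L k B R \<longleftrightarrow> (\<exists>a b. a \<in> B \<and> b \<in> B \<and> a \<noteq> b \<and> R = Cab a b)"
proof
  assume h: "complement_subset P L k B R"
  have RB: "R \<subseteq> Bk" using h unfolding complement_subset_def by blast
  have mi: "maximal_inexact P L k B (Bk - R)" using h unfolding complement_subset_def by blast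
  have ne: "\<not> exact P L k B (Bk - R)" using mi unfolding maximal_inexact_def inexact_def by blast
  have "\<exists>a b. a \<in> B \<and> b \<in> B \<and> a \<noteq> b \<and> (Bk - R) \<inter> Cab a b = {}"
  proof (rule ccontr)
    assume "\<not> (\<exists>a b. a \<in> B \<and> b \<in> B \<and> a \<noteq> b \<and> (Bk - R) \<inter> Cab a b = {})"
    then have H: "\<And>a b. a \<in> B \<Longrightarrow> b \<in> B \<Longrightarrow> a \<noteq> b \<Longrightarrow> (Bk - R) \<inter> Cab a b \<noteq> {}" by blast
    have "exact P L k B (Bk - R)" by (rule exact_crit[OF Diff_subset H])
    then show False using ne by blast
  qed
  then obtain a b where ab: "a \<in> B" "b \<in> B" "a \<noteq> b" "(Bk - R) \<inter> Cab a b = {}" by blast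
  have CR: "Cab a b \<subseteq> R" using ab(4) Cab_sub by blast
  have ie: "inexact P L k B (Bk - Cab a b)" using inexact_Cab[OF P2 ab(1-3)] .
  have sub: "Bk - R \<subseteq> Bk - Cab a b" using CR by blast
  have eq: "Bk - R = Bk - Cab a b"
  proof (rule ccontr)
    assume "Bk - R \<noteq> Bk - Cab a b"
    then have "Bk - R \<subset> Bk - Cab a b" using sub by blast
    moreover have "Bk - Cab a b \<subseteq> Bk" by blast
    ultimately have "\<not> inexact P L k B (Bk - Cab a b)" using mi unfolding maximal_inexact_def by blast
    then show False using ie by blast
  qed
  have "R = Cab a b"
  proof
    show "R \<subseteq> Cab a b" using eq RB by blast
    show "Cab a b \<subseteq> R" by (rule CR)
  qed
  then show "\<exists>a b. a \<in> B \<and> b \<in> B \<and> a \<noteq> b \<and> R = Cab a b" using ab by blast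
next
  assume "\<exists>a b. a \<in> B \<and> b \<in> B \<and> a \<noteq> b \<and> R = Cab a b"
  then obtain a b where ab: "a \<in> B" "b \<in> B" "a \<noteq> b" and R: "R = Cab a b" by blast
  have RB: "R \<subseteq> Bk" using R Cab_sub by blast
  have ie: "inexact P L k B (Bk - R)" using inexact_Cab[OF P2 ab] R by simp
  have mx: "\<not> inexact P L k B R'" if R': "Bk - R \<subset> R'" "R' \<subseteq> Bk" for R'
  proof -
    have "exact P L k B R'"
    proof (rule exact_crit[OF R'(2)])
      fix c d assume cd: "c \<in> B" "d \<in> B" "c \<noteq> d"
      show "R' \<inter> Cab c d \<noteq> {}"
      proof (cases "(a, b) = (c, d)")
        case True
        obtain U where U: "U \<in> R'" "U \<notin> Bk - R" using R'(1) by blast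
        then have "U \<in> Cab a b" using R'(2) R by blast
        then show ?thesis using U True by blast
      next
        case False
        obtain U where U: "U \<in> Cab c d" "U \<notin> Cab a b"
          using Cab_sep[OF ab(1,2) cd(1,2) ab(3) cd(3) False] by blast
        then have "U \<in> Bk - R" using Cab_sub R by blast
        then show ?thesis using U R'(1) by blast
      qed
    qed
    then show ?thesis unfolding inexact_def by blast
  qed
  show "complement_subset P L k B R"
    unfolding complement_subset_def maximal_inexact_def using RB ie mx by blast
qed

lemma Cab_inj:
  assumes "a \<in> B" "b \<in> B" "c \<in> B" "d \<in> B" "a \<noteq> b" "c \<noteq> d" "Cab a b = Cab c d"
  shows "a = c \<and> b = d"
proof (rule ccontr)
  assume "\<not> (a = c \<and> b = d)"
  then have "(a, b) \<noteq> (c, d)" by simp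
  then obtain U where "U \<in> Cab c d" "U \<notin> Cab a b" using Cab_sep assms by blast
  then show False using assms(7) by blast
qed

lemma adj_iff:
  assumes U: "U \<in> Bk" "U' \<in> Bk"
  shows "adjacent P L k U U' \<longleftrightarrow> card ((U \<inter> B) \<inter> (U' \<inter> B)) = k"
proof -
  have X: "U \<inter> B \<subseteq> B" "U = sp (U \<inter> B)" using Bk_cap[OF U(1)] by auto
  have X': "U' \<inter> B \<subseteq> B" "U' = sp (U' \<inter> B)" using Bk_cap[OF U(2)] by auto
  have "sp (U \<inter> B) \<inter> sp (U' \<inter> B) = sp ((U \<inter> B) \<inter> (U' \<inter> B))"
    by (rule span_inter[OF BI finB'[OF X(1)] X(1) X'(1)])
  then have I: "U \<inter> U' = sp ((U \<inter> B) \<inter> (U' \<inter> B))" using X X' by simp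
  have d: "has_dim P L U k" "has_dim P L U' k" using U unfolding base_subset_def grass_def by auto
  have IB: "(U \<inter> B) \<inter> (U' \<inter> B) \<subseteq> B" by blast
  have "has_dim P L (U \<inter> U') (k - 1) \<longleftrightarrow> (U \<inter> B) \<inter> (U' \<inter> B) \<noteq> {} \<and> card ((U \<inter> B) \<inter> (U' \<inter> B)) = k - 1 + 1"
    unfolding I by (rule dim_span_iff[OF indepB[OF IB] finB'[OF IB]])
  also have "\<dots> \<longleftrightarrow> card ((U \<inter> B) \<inter> (U' \<inter> B)) = k" using k0 by auto
  finally show ?thesis unfolding adjacent_def using d by blast
qed

end


context bs
begin

lemma reg_imp_adj:
  assumes P2: "axiom_P2 L" and U: "U \<in> Bk" "U' \<in> Bk" "U \<noteq> U'"
    and reg: "regular P L k B m C" and inC: "\<forall>R\<in>C. U \<in> R \<and> U' \<in> R"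
  shows "card ((U \<inter> B) \<inter> (U' \<inter> B)) = k"
proof (rule ccontr)
  assume ck: "card ((U \<inter> B) \<inter> (U' \<inter> B)) \<noteq> k"
  define X where "X = U \<inter> B"
  define X' where "X' = U' \<inter> B"
  have X: "X \<subseteq> B" "card X = k + 1" "U = sp X" using Bk_cap[OF U(1)] X_def by auto
  have X': "X' \<subseteq> B" "card X' = k + 1" "U' = sp X'" using Bk_cap[OF U(2)] X'_def by auto
  have fX: "finite X" using X(1) by (rule finB')
  have fX': "finite X'" using X'(1) by (rule finB')
  have XX': "X \<noteq> X'" using U(3) X(3) X'(3) by auto
  define I where "I = X \<inter> X'"
  have cI: "card I \<noteq> k" using ck unfolding I_def X_def X'_def .
  have IX: "I \<subset> X"
  proof -
    have "I \<subseteq> X" unfolding I_def by blast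
    moreover have "I \<noteq> X"
    proof
      assume "I = X"
      then have "X \<subseteq> X'" unfolding I_def by blast
      then have "X = X'" using card_subset_eq[OF fX'] X(2) X'(2) by simp
      then show False using XX' by simp
    qed
    ultimately show ?thesis by blast
  qed
  have "card I < card X" using psubset_card_mono[OF fX IX] .
  then have cI2: "card I + 1 \<le> k" using cI X(2) by simp
  have fI: "finite I" unfolding I_def using fX by simp
  have cU: "card (X \<union> X') + card I = card X + card X'" unfolding I_def using card_Un_Int[OF fX fX'] by simp
  have XUB: "X \<union> X' \<subseteq> B" using X(1) X'(1) by blast
  have fXU: "finite (X \<union> X')" using fX fX' by simp
  have cO: "card (B - (X \<union> X')) = card B - card (X \<union> X')" by (rule card_Diff_subset[OF fXU XUB])
  have "card (X \<union> X') \<le> card B" by (rule card_mono[OF finB XUB])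
  then have cO2: "card (B - (X \<union> X')) + 2 \<le> n - k" using cO cU cI2 X(2) X'(2) cardB by linarith
  obtain R0 where R0: "complement_subset P L k B R0" "R0 \<notin> C" "regular_full P L k B m (insert R0 C)"
    using reg unfolding regular_def by blast
  obtain V where V: "\<Inter>(insert R0 C) = {V}" using R0(3) unfolding regular_full_def by blast
  have "\<exists>a b. a \<in> B \<and> b \<in> B \<and> a \<noteq> b \<and> R0 = Cab a b" using R0(1) by (rule iffD1[OF comp_char[OF P2]])
  then obtain a0 b0 where ab0: "a0 \<in> B" "b0 \<in> B" "a0 \<noteq> b0" "R0 = Cab a0 b0" by blast
  have VR: "\<And>R. R \<in> insert R0 C \<Longrightarrow> V \<in> R" using V by blast
  have VR0: "V \<in> Cab a0 b0" using VR[of R0] ab0(4) by simp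
  define Yv where "Yv = V \<inter> B"
  have a0Y: "a0 \<in> Yv" using VR0 ab0(1) unfolding Cab_def Yv_def by blast
  have b0Y: "b0 \<notin> Yv" using VR0 unfolding Cab_def Yv_def by blast
  define A where "A = Yv \<inter> insert a0 I"
  define Bo where "Bo = (B - Yv) \<inter> insert b0 (B - (X \<union> X'))"
  have cA: "card A \<le> k"
  proof -
    have "card A \<le> card (insert a0 I)" unfolding A_def using fI by (intro card_mono) auto
    also have "\<dots> \<le> Suc (card I)" using fI by (simp add: card_insert_if)
    finally show ?thesis using cI2 by simp
  qed
  have cBo: "card Bo + k + 1 \<le> n"
  proof -
    have "card Bo \<le> card (insert b0 (B - (X \<union> X')))" unfolding Bo_def using finB by (intro card_mono) auto
    also have "\<dots> \<le> Suc (card (B - (X \<union> X')))" using finB by (simp add: card_insert_if)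
    finally show ?thesis using cO2 kn by linarith
  qed
  have memb: "sp Y \<in> \<Inter>(insert R0 C)" if Y: "Y \<subseteq> B" "card Y = k + 1" "A \<subseteq> Y" "Y \<inter> Bo = {}" for Y
  proof
    fix R assume R: "R \<in> insert R0 C"
    show "sp Y \<in> R"
    proof (cases "R = R0")
      case True
      have "a0 \<in> Y" using a0Y Y(3) unfolding A_def by blast
      moreover have "b0 \<notin> Y" using b0Y ab0(2) Y(4) unfolding Bo_def by blast
      ultimately show ?thesis using Cab_span[OF Y(1,2) ab0(1,2)] True ab0(4) by simp
    next
      case False
      then have RC: "R \<in> C" using R by blast
      have "complement_subset P L k B R" using reg RC unfolding regular_def by blast
      then have "\<exists>a b. a \<in> B \<and> b \<in> B \<and> a \<noteq> b \<and> R = Cab a b" by (rule iffD1[OF comp_char[OF P2]])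
      then obtain a b where ab: "a \<in> B" "b \<in> B" "a \<noteq> b" "R = Cab a b" by blast
      have "U \<in> Cab a b" "U' \<in> Cab a b" using inC RC ab(4) by auto
      then have aX: "a \<in> X" "a \<in> X'" and bX: "b \<notin> X" "b \<notin> X'"
        unfolding Cab_def X_def X'_def using ab(1) by auto
      have "V \<in> Cab a b" using VR R ab(4) by simp
      then have aV: "a \<in> Yv" and bV: "b \<notin> Yv" unfolding Cab_def Yv_def using ab(1) by auto
      have "a \<in> Y" using aX aV Y(3) unfolding A_def I_def by blast
      moreover have "b \<notin> Y" using bX bV ab(2) Y(4) unfolding Bo_def by blast
      ultimately show ?thesis using Cab_span[OF Y(1,2) ab(1,2)] ab(4) by simp
    qed
  qed
  define C0 where "C0 = B - Bo"
  have BoB: "Bo \<subseteq> B" unfolding Bo_def by blast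
  have fBo: "finite Bo" using BoB by (rule finB')
  have cC0: "card C0 = card B - card Bo" unfolding C0_def by (rule card_Diff_subset[OF fBo BoB])
  then have cC0': "k + 2 \<le> card C0" using cBo cardB by linarith
  have fC0: "finite C0" unfolding C0_def using finB by simp
  have AC0: "A \<subseteq> C0" unfolding A_def C0_def Bo_def Yv_def by blast
  obtain Y1 where Y1: "A \<subseteq> Y1" "Y1 \<subseteq> C0" "card Y1 = k + 1"
    using between_card[OF fC0 AC0, of "k + 1"] cA cC0' by auto
  have "\<not> C0 \<subseteq> Y1"
  proof
    assume "C0 \<subseteq> Y1"
    then have "card C0 \<le> card Y1" using card_mono fC0 Y1(2) finite_subset by metis
    then show False using cC0' Y1(3) by simp
  qed
  then obtain e where e: "e \<in> C0" "e \<notin> Y1" by blast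
  have fY1: "finite Y1" using Y1(2) fC0 finite_subset by blast
  have "\<not> Y1 \<subseteq> A"
  proof
    assume "Y1 \<subseteq> A"
    moreover have "finite A" using AC0 fC0 finite_subset by blast
    ultimately have "card Y1 \<le> card A" using card_mono by metis
    then show False using cA Y1(3) by simp
  qed
  then obtain f where f: "f \<in> Y1" "f \<notin> A" by blast
  define Y2 where "Y2 = insert e (Y1 - {f})"
  have cY2: "card Y2 = k + 1"
  proof -
    have "card (Y1 - {f}) = k" using Y1(3) f(1) fY1 by simp
    then show ?thesis unfolding Y2_def using e(2) fY1 by simp
  qed
  have Y2C0: "Y2 \<subseteq> C0" unfolding Y2_def using Y1(2) e(1) by blast
  have AY2: "A \<subseteq> Y2" unfolding Y2_def using Y1(1) f(2) by blast
  have C0B: "C0 \<subseteq> B" "C0 \<inter> Bo = {}" unfolding C0_def by auto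
  have "sp Y1 \<in> \<Inter>(insert R0 C)"
    by (rule memb) (use Y1 C0B in auto)
  then have "sp Y1 \<in> {V}" unfolding V .
  then have s1: "sp Y1 = V" by simp
  have "sp Y2 \<in> \<Inter>(insert R0 C)"
    by (rule memb) (use Y2C0 AY2 cY2 C0B in auto)
  then have "sp Y2 \<in> {V}" unfolding V .
  then have s2: "sp Y2 = V" by simp
  have "Y1 = Y2"
  proof -
    have "Y1 = sp Y1 \<inter> B" using span_cap_B Y1(2) C0B(1) by (metis subset_trans)
    also have "\<dots> = sp Y2 \<inter> B" using s1 s2 by simp
    also have "\<dots> = Y2" using span_cap_B Y2C0 C0B(1) by (metis subset_trans)
    finally show ?thesis .
  qed
  moreover have "e \<in> Y2" unfolding Y2_def by blast
  ultimately show False using e(2) by blast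
qed

end


context bs
begin

lemma adj_imp_reg:
  assumes P2: "axiom_P2 L" and U: "U \<in> Bk" "U' \<in> Bk"
    and ck: "card ((U \<inter> B) \<inter> (U' \<inter> B)) = k"
  shows "\<exists>C. regular P L k B (max k (n - k - 1)) C \<and> (\<forall>R\<in>C. U \<in> R \<and> U' \<in> R)"
proof -
  define X where "X = U \<inter> B"
  define X' where "X' = U' \<inter> B"
  have X: "X \<subseteq> B" "card X = k + 1" "U = sp X" using Bk_cap[OF U(1)] X_def by auto
  have X': "X' \<subseteq> B" "card X' = k + 1" "U' = sp X'" using Bk_cap[OF U(2)] X'_def by auto
  have fX: "finite X" using X(1) by (rule finB')
  have fX': "finite X'" using X'(1) by (rule finB')
  define I where "I = X \<inter> X'"
  have cI: "card I = k" using ck unfolding I_def X_def X'_def .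
  have fI: "finite I" unfolding I_def using fX by simp
  have IX: "I \<subseteq> X" "I \<subseteq> X'" unfolding I_def by auto
  have "card (X - I) = card X - card I" by (rule card_Diff_subset[OF fI IX(1)])
  then have "card (X - I) = 1" using cI X(2) by simp
  then obtain x where x: "X - I = {x}" by (auto simp: card_1_singleton_iff)
  have xX: "x \<in> X" "x \<notin> X'" using x unfolding I_def by auto
  have Xx: "X = insert x I" using x IX(1) by blast
  have cU: "card (X \<union> X') + card I = card X + card X'" unfolding I_def using card_Un_Int[OF fX fX'] by simp
  have XUB: "X \<union> X' \<subseteq> B" using X(1) X'(1) by blast
  have fXU: "finite (X \<union> X')" using fX fX' by simp
  define O0 where "O0 = B - (X \<union> X')"
  have cO: "card O0 = card B - card (X \<union> X')" unfolding O0_def by (rule card_Diff_subset[OF fXU XUB])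
  have cO2: "card O0 = n - k - 1" using cO cU cI X(2) X'(2) cardB by linarith
  have fO: "finite O0" unfolding O0_def using finB by simp
  have "card O0 > 0" using cO2 kn by linarith
  then obtain b0 where b0: "b0 \<in> O0" using card_gt_0_iff by (metis all_not_in_conv)
  define m where "m = max k (n - k - 1)"
  have "n - k - 1 \<ge> 1" using kn by linarith
  then have "k \<le> k * (n - k - 1)" by simp
  moreover have "n - k - 1 \<le> k * (n - k - 1)" using k0 by simp
  ultimately have m_le: "m \<le> k * (n - k - 1)" unfolding m_def by simp
  have k_le: "k \<le> m" unfolding m_def by simp
  have cIO: "card (I \<times> O0) = k * (n - k - 1)" using cI cO2 by (simp add: card_cartesian_product)
  have cIb: "card (I \<times> {b0}) = k" using cI by (simp add: card_cartesian_product)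
  have sIb: "I \<times> {b0} \<subseteq> I \<times> O0" using b0 by blast
  have fIO: "finite (I \<times> O0)" using fI fO by simp
  obtain T where T: "I \<times> {b0} \<subseteq> T" "T \<subseteq> I \<times> O0" "card T = m"
    using between_card[OF fIO sIb, of m] cIb cIO k_le m_le by auto
  define F where "F = (\<lambda>p. Cab (fst p) (snd p))"
  have pr: "fst p \<in> B \<and> snd p \<in> B \<and> fst p \<noteq> snd p" if "p \<in> I \<times> O0" for p
    using that X(1) unfolding I_def O0_def by auto
  have inj: "inj_on F (I \<times> O0)"
  proof (rule inj_onI)
    fix p p' assume p: "p \<in> I \<times> O0" "p' \<in> I \<times> O0" "F p = F p'"
    have "fst p = fst p' \<and> snd p = snd p'"
      using Cab_inj[of "fst p" "snd p" "fst p'" "snd p'"] pr[OF p(1)] pr[OF p(2)] p(3)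
      unfolding F_def by blast
    then show "p = p'" by (simp add: prod_eq_iff)
  qed
  define C where "C = F ` T"
  have cC: "card C = m" unfolding C_def using card_image[OF inj_on_subset[OF inj T(2)]] T(3) by simp
  have fT: "finite T" using T(2) fIO finite_subset by blast
  have fC: "finite C" unfolding C_def using fT by simp
  define R0 where "R0 = Cab x b0"
  have xB: "x \<in> B" using xX X(1) by blast
  have b0B: "b0 \<in> B" "b0 \<notin> X" "b0 \<notin> X'" using b0 unfolding O0_def by auto
  have xb0: "x \<noteq> b0" using xX b0B by blast
  have R0C: "R0 \<notin> C"
  proof
    assume "R0 \<in> C"
    then obtain p where p: "p \<in> T" "R0 = F p" unfolding C_def by blast
    have pIO: "p \<in> I \<times> O0" using p(1) T(2) by blast
    have "x = fst p" using Cab_inj[OF xB b0B(1) _ _ xb0, of "fst p" "snd p"] pr[OF pIO] p(2)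
      unfolding R0_def F_def by blast
    then have "x \<in> I" using pIO by auto
    then show False using xX IX by blast
  qed
  have compC: "\<forall>R\<in>C. complement_subset P L k B R"
  proof
    fix R assume "R \<in> C"
    then obtain p where p: "p \<in> T" "R = F p" unfolding C_def by blast
    have "p \<in> I \<times> O0" using p(1) T(2) by blast
    then have "\<exists>a b. a \<in> B \<and> b \<in> B \<and> a \<noteq> b \<and> R = Cab a b" using pr p(2) unfolding F_def by blast
    then show "complement_subset P L k B R" by (rule iffD2[OF comp_char[OF P2]])
  qed
  have compR0: "complement_subset P L k B R0"
  proof (rule iffD2[OF comp_char[OF P2]])
    show "\<exists>a b. a \<in> B \<and> b \<in> B \<and> a \<noteq> b \<and> R0 = Cab a b" using xB b0B xb0 unfolding R0_def by blast
  qed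
  have cC2: "card (insert R0 C) = m + 1" using fC R0C cC by simp
  have inC: "\<forall>R\<in>C. U \<in> R \<and> U' \<in> R"
  proof
    fix R assume "R \<in> C"
    then obtain p where p: "p \<in> T" "R = F p" unfolding C_def by blast
    have pIO: "p \<in> I \<times> O0" using p(1) T(2) by blast
    have a: "fst p \<in> X" "fst p \<in> X'" using pIO IX by auto
    have b: "snd p \<notin> X" "snd p \<notin> X'" using pIO unfolding O0_def by auto
    have "U \<in> Cab (fst p) (snd p)" using Cab_span[OF X(1,2)] pr[OF pIO] a b X(3) by simp
    moreover have "U' \<in> Cab (fst p) (snd p)" using Cab_span[OF X'(1,2)] pr[OF pIO] a b X'(3) by simp
    ultimately show "U \<in> R \<and> U' \<in> R" using p(2) unfolding F_def by simp
  qed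
  have UR0: "U \<in> R0" unfolding R0_def using Cab_span[OF X(1,2) xB b0B(1)] xX b0B X(3) by simp
  have inter: "\<Inter>(insert R0 C) = {U}"
  proof
    show "{U} \<subseteq> \<Inter>(insert R0 C)" using UR0 inC by blast
    show "\<Inter>(insert R0 C) \<subseteq> {U}"
    proof
      fix V assume V: "V \<in> \<Inter>(insert R0 C)"
      then have VR0: "V \<in> Cab x b0" unfolding R0_def by blast
      then have VB: "V \<in> Bk" unfolding Cab_def by blast
      define Yv where "Yv = V \<inter> B"
      have Yv: "Yv \<subseteq> B" "card Yv = k + 1" "V = sp Yv" using Bk_cap[OF VB] Yv_def by auto
      have "x \<in> Yv" using VR0 xB unfolding Cab_def Yv_def by blast
      moreover have "I \<subseteq> Yv"
      proof
        fix a assume a: "a \<in> I"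
        then have "(a, b0) \<in> T" using T(1) by blast
        then have "F (a, b0) \<in> C" unfolding C_def by blast
        then have "V \<in> Cab a b0" using V unfolding F_def by auto
        moreover have "a \<in> B" using a IX X(1) by blast
        ultimately show "a \<in> Yv" unfolding Cab_def Yv_def by blast
      qed
      ultimately have "X \<subseteq> Yv" using Xx by blast
      moreover have "finite Yv" using Yv(1) by (rule finB')
      ultimately have "X = Yv" using card_subset_eq X(2) Yv(2) by metis
      then show "V \<in> {U}" using Yv(3) X(3) by simp
    qed
  qed
  have "regular P L k B m C"
    unfolding regular_def regular_full_def
    using fC cC compC compR0 R0C cC2 inter by (intro conjI exI[of _ R0]) auto
  then show ?thesis using inC unfolding m_def by blast
qed

end

theorem lemma2p5:
  fixes P :: "'a set" and L :: "'a set set" and n k :: nat and B :: "'a set"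
  assumes "linear_space P L"
    and "has_dim P L P n"
    and "exchange_axiom P L"
    and "axiom_P2 L"
    and "0 < k" and "k < n - 1"
    and "is_base P L B" and "finite B" and "card B = n + 1"
    and "U \<in> base_subset P L k B" and "U' \<in> base_subset P L k B" and "U \<noteq> U'"
  shows "adjacent P L k U U' \<longleftrightarrow>
    (\<exists>C. regular P L k B (max k (n - k - 1)) C \<and> (\<forall>R\<in>C. U \<in> R \<and> U' \<in> R))"
proof -
  interpret bs P L B n k
    by unfold_locales (use assms in auto)
  show ?thesis
  proof
    assume "adjacent P L k U U'"
    then have "card ((U \<inter> B) \<inter> (U' \<inter> B)) = k" using adj_iff assms(10,11) by blast
    then show "\<exists>C. regular P L k B (max k (n - k - 1)) C \<and> (\<forall>R\<in>C. U \<in> R \<and> U' \<in> R)"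
      by (rule adj_imp_reg[OF assms(4,10,11)])
  next
    assume "\<exists>C. regular P L k B (max k (n - k - 1)) C \<and> (\<forall>R\<in>C. U \<in> R \<and> U' \<in> R)"
    then obtain C where C: "regular P L k B (max k (n - k - 1)) C" "\<forall>R\<in>C. U \<in> R \<and> U' \<in> R" by blast
    have "card ((U \<inter> B) \<inter> (U' \<inter> B)) = k"
      by (rule reg_imp_adj[OF assms(4,10,11,12) C])
    then show "adjacent P L k U U'" using adj_iff assms(10,11) by blast
  qed
qed


end
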